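(* Let $(s_t^{\mathrm{std}})_{t\ge1}$ be real random variables, let $W\ge1$ be an integer, $\kappa\ge0$, $h_{\mathrm C}>0$, and define for $t\ge1$ $$G_t^{\mathrm{score}}=\max_{1\le m\le\min(W,t)}\sqrt m\,\big(\bar s^{\mathrm{std}}_{t-m+1:t}-\kappa\big)_+,\qquad \bar s^{\mathrm{std}}_{t-m+1:t}=\frac1m\sum_{u=t-m+1}^t s_u^{\mathrm{std}},$$ where $(a)_+=\max(a,0)$. (i) (False alarms.) Suppose that for every $t\le T$, every $m\in\{1,\dots,\min(W,t)\}$ and every $a>0$, $\mathbb P(\sqrt m\,\bar s^{\mathrm{std}}_{t-m+1:t}>a)\le e^{-a^2/2}$. Then $$\mathbb P\Big(\max_{1\le t\le T}G_t^{\mathrm{score}}>h_{\mathrm C}\Big)\le TW\,e^{-h_{\mathrm C}^2/2}.$$ (ii) (Detection.) Suppose that for some time $t$ there is a block $\{t-m_\star+1,\dots,t\}$ of length $m_\star\le\min(W,t)$ and a number $\delta>\kappa$ such that, with $\bar s=\bar s^{\mathrm{std}}_{t-m_\star+1:t}$, one has $\mathbb P(\sqrt{m_\star}(\bar s-\delta)\le-u)\le e^{-u^2/2}$ for every $u>0$. Then for any $\beta\in(0,1)$, if $$m_\star\ge\frac{\big(h_{\mathrm C}+\sqrt{2\log(1/\beta)}\big)^2}{(\delta-\kappa)^2},$$ we have $\mathbb P(G_t^{\mathrm{score}}\le h_{\mathrm C})\le\beta$, i.e. a restart (the event $G^{\mathrm{score}}>h_{\mathrm C}$) occurs within the block with probability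 at least $1-\beta$. In particular, detection occurs within $O\big(h_{\mathrm C}^2/(\delta-\kappa)^2\big)$ samples up to logarithmic factors.
   Context: This is the window-limited CUSUM restart rule: $s_t^{\mathrm{std}}$ is a standardized prequential score (average negative log pre-update predictive likelihood on batch $t$, standardized by running mean and scale), $W$ the maximum window, $\kappa$ a drift allowance and $h_{\mathrm C}$ the restart threshold; a restart is triggered when $G_t^{\mathrm{score}}>h_{\mathrm C}$. *)

theory Defs
  imports "HOL-Probability.Probability"
begin

definition sbar :: "(nat \<Rightarrow> 'a \<Rightarrow> real) \<Rightarrow> nat \<Rightarrow> nat \<Rightarrow> 'a \<Rightarrow> real" where
  "sbar s t m \<omega> = (1 / real m) * (\<Sum>u\<in>{t - m + 1..t}. s u \<omega>)"

definition pos_part :: "real \<Rightarrow> real" where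
  "pos_part a = max a 0"

definition Gscore :: "nat \<Rightarrow> real \<Rightarrow> (nat \<Rightarrow> 'a \<Rightarrow> real) \<Rightarrow> nat \<Rightarrow> 'a \<Rightarrow> real" where
  "Gscore W \<kappa> s t \<omega> =
     Max ((\<lambda>m. sqrt (real m) * pos_part (sbar s t m \<omega> - \<kappa>)) ` {1..min W t})"

end

theory Submission
  imports Defs
begin

lemma sbar_meas:
  assumes "\<And>t. s t \<in> borel_measurable M"
  shows "(\<lambda>\<omega>. sbar s t m \<omega>) \<in> borel_measurable M"
  unfolding sbar_def using assms by measurable

lemma G_gt:
  assumes "Gscore W \<kappa> s t \<omega> > hC" "hC > 0" "W \<ge> 1" "t \<ge> 1" "\<kappa> \<ge> 0"
  shows "\<exists>m\<in>{1..min W t}. sqrt (real m) * sbar s t m \<omega> > hC"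
proof -
  have ne: "{1..min W t} \<noteq> {}" using assms by auto
  let ?f = "\<lambda>m. sqrt (real m) * pos_part (sbar s t m \<omega> - \<kappa>)"
  have "Max (?f ` {1..min W t}) \<in> ?f ` {1..min W t}"
    using ne by (intro Max_in) auto
  then obtain m where m: "m \<in> {1..min W t}" "Gscore W \<kappa> s t \<omega> = ?f m"
    unfolding Gscore_def by auto
  hence gt: "?f m > hC" using assms by simp
  hence "pos_part (sbar s t m \<omega> - \<kappa>) > 0" using assms(2)
    by (smt (verit) mult_nonneg_nonpos pos_part_def real_sqrt_ge_zero of_nat_0_le_iff)
  hence p: "pos_part (sbar s t m \<omega> - \<kappa>) = sbar s t m \<omega> - \<kappa>" unfolding pos_part_def by auto
  have "sqrt (real m) * \<kappa> \<ge> 0" using assms by simp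
  hence "sqrt (real m) * sbar s t m \<omega> > hC" using gt p by (simp add: algebra_simps)
  thus ?thesis using m by blast
qed

lemma G_le:
  assumes "Gscore W \<kappa> s t \<omega> \<le> hC" "m \<in> {1..min W t}"
  shows "sqrt (real m) * (sbar s t m \<omega> - \<kappa>) \<le> hC"
proof -
  let ?f = "\<lambda>m. sqrt (real m) * pos_part (sbar s t m \<omega> - \<kappa>)"
  have "?f m \<le> Max (?f ` {1..min W t})" using assms(2) by (intro Max_ge) auto
  moreover have "sqrt (real m) * (sbar s t m \<omega> - \<kappa>) \<le> ?f m"
    unfolding pos_part_def by (intro mult_left_mono) auto
  ultimately show ?thesis using assms(1) unfolding Gscore_def by linarith
qed

theorem proposition4:
  fixes M :: "'a measure" and s :: "nat \<Rightarrow> 'a \<Rightarrow> real"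
    and W :: nat and \<kappa> hC :: real
  assumes "prob_space M"
    and "\<And>t. s t \<in> borel_measurable M"
    and "W \<ge> 1" and "\<kappa> \<ge> 0" and "hC > 0"
  shows
    "(\<forall>T::nat.
        (\<forall>t\<in>{1..T}. \<forall>m\<in>{1..min W t}. \<forall>a>0.
            measure M {\<omega>\<in>space M. sqrt (real m) * sbar s t m \<omega> > a} \<le> exp (- a\<^sup>2 / 2))
        \<longrightarrow> measure M {\<omega>\<in>space M. \<exists>t\<in>{1..T}. Gscore W \<kappa> s t \<omega> > hC}
              \<le> real T * real W * exp (- hC\<^sup>2 / 2))
     \<and>
     (\<forall>(t::nat) (mstar::nat) (\<delta>::real) (\<beta>::real).
        1 \<le> mstar \<and> mstar \<le> min W t \<and> \<delta> > \<kappa>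
        \<and> (\<forall>u>0. measure M {\<omega>\<in>space M. sqrt (real mstar) * (sbar s t mstar \<omega> - \<delta>) \<le> - u}
                    \<le> exp (- u\<^sup>2 / 2))
        \<and> 0 < \<beta> \<and> \<beta> < 1
        \<and> real mstar \<ge> (hC + sqrt (2 * ln (1 / \<beta>)))\<^sup>2 / (\<delta> - \<kappa>)\<^sup>2
        \<longrightarrow> measure M {\<omega>\<in>space M. Gscore W \<kappa> s t \<omega> \<le> hC} \<le> \<beta>)"
proof -
  interpret P: prob_space M by fact
  have sm: "\<And>t m. (\<lambda>\<omega>. sbar s t m \<omega>) \<in> borel_measurable M"
    using sbar_meas assms(2) by blast
  show ?thesis
  proof (intro conjI allI impI)
    fix T :: nat
    assume H: "\<forall>t\<in>{1..T}. \<forall>m\<in>{1..min W t}. \<forall>a>0.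
            measure M {\<omega>\<in>space M. sqrt (real m) * sbar s t m \<omega> > a} \<le> exp (- a\<^sup>2 / 2)"
    define I where "I = Sigma {1..T} (\<lambda>t. {1..min W t})"
    define A where "A = (\<lambda>(t,m). {\<omega>\<in>space M. sqrt (real m) * sbar s t m \<omega> > hC})"
    have finI: "finite I" unfolding I_def by auto
    have Ameas: "A ` I \<subseteq> sets M"
      unfolding A_def using sm by (auto intro!: borel_measurable_le measurable_sets) 
    have sub: "{\<omega>\<in>space M. \<exists>t\<in>{1..T}. Gscore W \<kappa> s t \<omega> > hC} \<subseteq> (\<Union>i\<in>I. A i)"
    proof
      fix \<omega> assume "\<omega> \<in> {\<omega>\<in>space M. \<exists>t\<in>{1..T}. Gscore W \<kappa> s t \<omega> > hC}"
      then obtain t where t: "\<omega> \<in> space M" "t \<in> {1..T}" "Gscore W \<kappa> s t \<omega> > hC" by auto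
      then obtain m where "m\<in>{1..min W t}" "sqrt (real m) * sbar s t m \<omega> > hC"
        using G_gt[OF t(3) assms(5) assms(3) _ assms(4)] by auto
      hence "(t,m) \<in> I" "\<omega> \<in> A (t,m)" unfolding I_def A_def using t by auto
      thus "\<omega> \<in> (\<Union>i\<in>I. A i)" by blast
    qed
    have "measure M {\<omega>\<in>space M. \<exists>t\<in>{1..T}. Gscore W \<kappa> s t \<omega> > hC} \<le> measure M (\<Union>i\<in>I. A i)"
      using sub Ameas finI by (intro P.finite_measure_mono) auto
    also have "\<dots> \<le> (\<Sum>i\<in>I. measure M (A i))"
      using Ameas finI by (intro P.finite_measure_subadditive_finite) auto
    also have "\<dots> \<le> (\<Sum>i\<in>I. exp (- hC\<^sup>2 / 2))"
      using H assms(5) unfolding I_def A_def by (intro sum_mono) auto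
    also have "\<dots> = real (card I) * exp (- hC\<^sup>2 / 2)" by simp
    also have "\<dots> \<le> real T * real W * exp (- hC\<^sup>2 / 2)"
    proof -
      have "I \<subseteq> {1..T} \<times> {1..W}" unfolding I_def by auto
      hence "card I \<le> T * W" by (metis card_atLeastAtMost card_cartesian_product card_mono
            diff_Suc_1 finite_SigmaI finite_atLeastAtMost)
      hence "real (card I) \<le> real T * real W" by (metis of_nat_le_iff of_nat_mult)
      thus ?thesis by (intro mult_right_mono) auto
    qed
    finally show "measure M {\<omega>\<in>space M. \<exists>t\<in>{1..T}. Gscore W \<kappa> s t \<omega> > hC}
              \<le> real T * real W * exp (- hC\<^sup>2 / 2)" .
  next
    fix t mstar :: nat and \<delta> \<beta> :: real
    assume H: "1 \<le> mstar \<and> mstar \<le> min W t \<and> \<delta> > \<kappa>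
        \<and> (\<forall>u>0. measure M {\<omega>\<in>space M. sqrt (real mstar) * (sbar s t mstar \<omega> - \<delta>) \<le> - u}
                    \<le> exp (- u\<^sup>2 / 2))
        \<and> 0 < \<beta> \<and> \<beta> < 1
        \<and> real mstar \<ge> (hC + sqrt (2 * ln (1 / \<beta>)))\<^sup>2 / (\<delta> - \<kappa>)\<^sup>2"
    define L where "L = sqrt (2 * ln (1 / \<beta>))"
    define u where "u = sqrt (real mstar) * (\<delta> - \<kappa>) - hC"
    have lnpos: "ln (1/\<beta>) > 0" using H by simp
    hence Lpos: "L > 0" unfolding L_def by simp
    have L2: "L\<^sup>2 = 2 * ln (1/\<beta>)" unfolding L_def using lnpos by simp
    have dk: "\<delta> - \<kappa> > 0" using H by simp
    have "(hC + L)\<^sup>2 \<le> real mstar * (\<delta> - \<kappa>)\<^sup>2"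
      using H dk unfolding L_def by (simp add: divide_le_eq)
    hence "sqrt ((hC + L)\<^sup>2) \<le> sqrt (real mstar * (\<delta> - \<kappa>)\<^sup>2)" by (rule real_sqrt_le_mono)
    hence "hC + L \<le> sqrt (real mstar) * (\<delta> - \<kappa>)" using Lpos assms(5) dk
      by (simp add: real_sqrt_mult)
    hence uL: "u \<ge> L" unfolding u_def by simp
    hence upos: "u > 0" using Lpos by simp
    have sub: "{\<omega>\<in>space M. Gscore W \<kappa> s t \<omega> \<le> hC}
       \<subseteq> {\<omega>\<in>space M. sqrt (real mstar) * (sbar s t mstar \<omega> - \<delta>) \<le> - u}"
    proof safe
      fix \<omega> assume "\<omega> \<in> space M" "Gscore W \<kappa> s t \<omega> \<le> hC"
      hence "sqrt (real mstar) * (sbar s t mstar \<omega> - \<kappa>) \<le> hC"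
        using H by (intro G_le) auto
      thus "sqrt (real mstar) * (sbar s t mstar \<omega> - \<delta>) \<le> - u"
        unfolding u_def by (simp add: algebra_simps)
    qed
    have "measure M {\<omega>\<in>space M. Gscore W \<kappa> s t \<omega> \<le> hC}
       \<le> measure M {\<omega>\<in>space M. sqrt (real mstar) * (sbar s t mstar \<omega> - \<delta>) \<le> - u}"
      using sub sm by (intro P.finite_measure_mono) (auto intro!: borel_measurable_le measurable_sets)
    also have "\<dots> \<le> exp (- u\<^sup>2 / 2)" using H upos by blast
    also have "\<dots> \<le> exp (- L\<^sup>2 / 2)"
      using uL Lpos by (simp add: power_mono)
    also have "\<dots> = \<beta>" using L2 H by (simp add: ln_div exp_minus_inverse) 
    finally show "measure M {\<omega>\<in>space M. Gscore W \<kappa> s t \<omega> \<le> hC} \<le> \<beta>" .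
  qed
qed

end
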